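(* Assume $a_2\neq 0$, $b_2\neq 0$ and that the $h_k$ are pairwise distinct. With $z_1=qa_1/a_2$ and $y_1,y_2,y_3$ as defined, for all $n\geq k\geq 0$, $$c_{n,k}=\frac{b_2^{\,n-k}}{q^{(n-k)k}}\cdot\frac{(q^{k+1};q)_{n-k}\,(q^ky_1;q)_{n-k}\,(q^ky_2;q)_{n-k}\,(q^ky_3;q)_{n-k}}{(q;q)_{n-k}\,(z_1q^{n+k-1};q)_{n-k}}.$$
   Context: Fix $q\in\mathbb{C}$ with $q\neq 0$ and $|q|\neq 1$. Fix complex parameters $a_1,a_2,b_0,b_1,b_2,s_1,s_2$, put $s_0=-s_1-s_2$, and for $k\geq 0$ define $x_k=b_0+b_1q^k+b_2q^{-k}$, $h_k=a_1q^k+a_2q^{-k}$, $d_k=s_0+s_1q^k+s_2q^{-k}$. Let $g_0=0$ and $g_k=x_{k-1}(h_k-h_0)+d_k$ for $k\geq 1$. Define $c_{n,n}=1$ and $c_{n,k}=\prod_{j=k}^{n-1}\frac{g_{j+1}}{h_n-h_j}$ for $0\leq k<n$ (these are the coefficients of the monic polynomial $u_n(t)=\sum_{k=0}^nc_{n,k}v_k(t)$ in the Newton basis $v_k(t)=\prod_{i=0}^{k-1}(t-x_i)$). Put $z_1=qa_1/a_2$, $z_2=qb_1/b_2$, and let $y_1,y_2,y_3$ be the roots of the cubic with $y_1+y_2+y_3=z_1-\frac{b_0+s_2/a_2}{b_2}$, $y_1y_2+y_1y_3+y_2y_3=\frac{z_2}{q}-\frac{qs_1/a_2+b_0z_1}{b_2}$,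 $y_1y_2y_3=\frac{z_1z_2}{q}$. $(t;q)_k=\prod_{i=0}^{k-1}(1-q^it)$. *)

theory Defs
  imports Complex_Main
begin

definition qpoch :: "complex \<Rightarrow> complex \<Rightarrow> nat \<Rightarrow> complex" where
  "qpoch t q k = (\<Prod>i<k. 1 - q ^ i * t)"

definition xx :: "complex \<Rightarrow> complex \<Rightarrow> complex \<Rightarrow> complex \<Rightarrow> nat \<Rightarrow> complex" where
  "xx q b0 b1 b2 k = b0 + b1 * q ^ k + b2 * inverse (q ^ k)"

definition hh :: "complex \<Rightarrow> complex \<Rightarrow> complex \<Rightarrow> nat \<Rightarrow> complex" where
  "hh q a1 a2 k = a1 * q ^ k + a2 * inverse (q ^ k)"

text \<open>d_k with s_0 = - s_1 - s_2.\<close>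
definition dd :: "complex \<Rightarrow> complex \<Rightarrow> complex \<Rightarrow> nat \<Rightarrow> complex" where
  "dd q s1 s2 k = (- s1 - s2) + s1 * q ^ k + s2 * inverse (q ^ k)"

definition gg :: "complex \<Rightarrow> complex \<Rightarrow> complex \<Rightarrow> complex \<Rightarrow> complex \<Rightarrow> complex
    \<Rightarrow> complex \<Rightarrow> complex \<Rightarrow> nat \<Rightarrow> complex" where
  "gg q a1 a2 b0 b1 b2 s1 s2 k =
     (if k = 0 then 0
      else xx q b0 b1 b2 (k - 1) * (hh q a1 a2 k - hh q a1 a2 0) + dd q s1 s2 k)"

definition cc :: "complex \<Rightarrow> complex \<Rightarrow> complex \<Rightarrow> complex \<Rightarrow> complex \<Rightarrow> complex
    \<Rightarrow> complex \<Rightarrow> complex \<Rightarrow> nat \<Rightarrow> nat \<Rightarrow> complex" where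
  "cc q a1 a2 b0 b1 b2 s1 s2 n k =
     (\<Prod>j\<in>{k..<n}. gg q a1 a2 b0 b1 b2 s1 s2 (j + 1) / (hh q a1 a2 n - hh q a1 a2 j))"

end

theory Submission imports Defs begin

lemma g_formula:
  fixes q a1 a2 b0 b1 b2 s1 s2 y1 y2 y3 :: complex
  assumes hq0: "q \<noteq> 0" and ha2: "a2 \<noteq> 0" and hb2: "b2 \<noteq> 0"
    and e1: "y1 + y2 + y3 = q * a1 / a2 - (b0 + s2 / a2) / b2"
    and e2: "y1 * y2 + y1 * y3 + y2 * y3
             = (q * b1 / b2) / q - (q * s1 / a2 + b0 * (q * a1 / a2)) / b2"
    and e3: "y1 * y2 * y3 = (q * a1 / a2) * (q * b1 / b2) / q"
  shows "gg q a1 a2 b0 b1 b2 s1 s2 (j+1) * q^(2*j+1)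
      = a2*b2*(1-q^(j+1))*(1-q^j*y1)*(1-q^j*y2)*(1-q^j*y3)"
proof -
  define Q where "Q = q^j"
  have Q0: "Q \<noteq> 0" using hq0 by (simp add: Q_def)
  have p1a: "q^(j+1) = q*Q" by (simp add: Q_def)
  have p1b: "q^(2*j+1) = q*Q*Q" unfolding Q_def mult_2 power_add by simp
  note p1 = p1a p1b
  have prod: "(1-Q*y1)*(1-Q*y2)*(1-Q*y3) = 1 - Q*(y1+y2+y3) + Q^2*(y1 * y2 + y1 * y3 + y2 * y3) - Q^3*(y1*y2*y3)"
    by (simp add: algebra_simps power2_eq_square power3_eq_cube)
  have "gg q a1 a2 b0 b1 b2 s1 s2 (j+1) = (b0 + b1*Q + b2*inverse Q)*(a1*q*Q + a2*inverse q*inverse Q - a1 - a2) + ((- s1 - s2) + s1*q*Q + s2*inverse q*inverse Q)"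
    by (simp add: gg_def xx_def hh_def dd_def Q_def mult_ac)
  then have "gg q a1 a2 b0 b1 b2 s1 s2 (j+1) * q^(2*j+1) = ((b0 + b1*Q + b2*inverse Q)*(a1*q*Q + a2*inverse q*inverse Q - a1 - a2) + ((- s1 - s2) + s1*q*Q + s2*inverse q*inverse Q))*(q*Q*Q)"
    by (simp only: p1b)
  also have "\<dots> = a2*b2*(1-q*Q)*(1 - Q*(y1+y2+y3) + Q^2*(y1 * y2 + y1 * y3 + y2 * y3) - Q^3*(y1*y2*y3))"
    unfolding e1 e2 e3 using hq0 Q0 ha2 hb2
    by (simp add: field_simps power2_eq_square power3_eq_cube)
  finally show ?thesis using prod by (simp add: p1 Q_def mult_ac)
qed

lemma h_formula:
  fixes q a1 a2 :: complex
  assumes hq0: "q \<noteq> 0" and ha2: "a2 \<noteq> 0" and "j < n"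
  shows "(hh q a1 a2 n - hh q a1 a2 j) * q^n = a2 * (1 - q^(n-j)) * (1 - (q*a1/a2) * q^(n+j-1))"
proof -
  obtain d where n: "n = j + Suc d" using assms(3) less_iff_Suc_add by auto
  define Q where "Q = q^j"
  define D where "D = q^d"
  have Q0: "Q \<noteq> 0" "D \<noteq> 0" using hq0 by (simp_all add: Q_def D_def)
  have qj: "q^j = Q" by (simp add: Q_def)
  have e: "q^n = Q*D*q" "q^(n-j) = D*q" "q^(n+j-1) = Q*Q*D"
    by (simp_all add: n Q_def D_def power_add mult_ac)
  show ?thesis unfolding hh_def e qj using hq0 Q0 ha2
    by (simp add: field_simps)
qed

lemma alg:
  fixes A B a2 b2 X S T U V :: complex
  assumes "A \<noteq> 0" "B \<noteq> 0" "a2 \<noteq> 0" "S \<noteq> 0" "T \<noteq> 0" "U \<noteq> 0" "S * U = V * T"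
  shows "a2*b2*X / T / (a2 * A * B / S) = b2 * (V / U) * X / (A*B)"
proof -
  have "V = S*U/T" using assms by (simp add: field_simps)
  then show ?thesis using assms by (simp add: field_simps)
qed

lemma factor_formula:
  fixes q a1 a2 b0 b1 b2 s1 s2 y1 y2 y3 :: complex
  assumes hq0: "q \<noteq> 0" and ha2: "a2 \<noteq> 0" and hb2: "b2 \<noteq> 0"
    and hdist: "\<And>i j. i \<noteq> j \<Longrightarrow> hh q a1 a2 i \<noteq> hh q a1 a2 j"
    and e1: "y1 + y2 + y3 = q * a1 / a2 - (b0 + s2 / a2) / b2"
    and e2: "y1 * y2 + y1 * y3 + y2 * y3
             = (q * b1 / b2) / q - (q * s1 / a2 + b0 * (q * a1 / a2)) / b2"
    and e3: "y1 * y2 * y3 = (q * a1 / a2) * (q * b1 / b2) / q"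
    and im: "i < m"
  shows "gg q a1 a2 b0 b1 b2 s1 s2 (k + i + 1) / (hh q a1 a2 (k+m) - hh q a1 a2 (k+i))
    = b2 * (q^(m - Suc i) / (q^i * q^k)) * ((1 - q^i*q^(k+1)) * (1 - q^i*(q^k*y1)) * (1 - q^i*(q^k*y2)) * (1 - q^i*(q^k*y3)))
      / ((1 - q^(m - Suc i)*q) * (1 - q^i*((q*a1/a2)*q^(k+m+k-1))))"
proof -
  define j where "j = k + i"
  define n where "n = k + m"
  have jn: "j < n" using im by (simp add: j_def n_def)
  have G: "gg q a1 a2 b0 b1 b2 s1 s2 (j+1) * q^(2*j+1)
      = a2*b2*(1-q^(j+1))*(1-q^j*y1)*(1-q^j*y2)*(1-q^j*y3)"
    by (rule g_formula[OF hq0 ha2 hb2 e1 e2 e3])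
  have H: "(hh q a1 a2 n - hh q a1 a2 j) * q^n = a2 * (1 - q^(n-j)) * (1 - (q*a1/a2) * q^(n+j-1))"
    by (rule h_formula[OF hq0 ha2 jn])
  have dh: "hh q a1 a2 n - hh q a1 a2 j \<noteq> 0" using hdist[of n j] jn by auto
  then have AB: "1 - q^(n-j) \<noteq> 0" "1 - (q*a1/a2) * q^(n+j-1) \<noteq> 0"
    using H hq0 by (auto simp del: power_Suc)
  have A: "1 - q^(m - Suc i)*q = 1 - q^(n-j)"
  proof -
    have "n - j = Suc (m - Suc i)" using im by (simp add: n_def j_def)
    then show ?thesis by (simp add: mult.commute)
  qed
  have B: "q^i*((q*a1/a2)*q^(k+m+k-1)) = (q*a1/a2) * q^(n+j-1)"
  proof -
    have "n+j-1 = i + (k+m+k-1)" using im by (simp add: n_def j_def)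
    then show ?thesis by (simp add: power_add mult_ac)
  qed
  have P: "q^n * (q^i * q^k) = q^(m - Suc i) * q^(2*j+1)"
  proof -
    have "n + (i + k) = (m - Suc i) + (2*j+1)" using im by (simp add: n_def j_def)
    then show ?thesis by (metis power_add)
  qed
  have N: "(1 - q^i*q^(k+1)) * (1 - q^i*(q^k*y1)) * (1 - q^i*(q^k*y2)) * (1 - q^i*(q^k*y3))
     = (1-q^(j+1))*(1-q^j*y1)*(1-q^j*y2)*(1-q^j*y3)"
    by (simp add: j_def power_add mult_ac)
  have gq: "gg q a1 a2 b0 b1 b2 s1 s2 (j+1) = a2*b2*((1-q^(j+1))*(1-q^j*y1)*(1-q^j*y2)*(1-q^j*y3)) / q^(2*j+1)"
    using G hq0 by (simp add: field_simps)
  have hq: "hh q a1 a2 n - hh q a1 a2 j = a2 * (1 - q^(n-j)) * (1 - (q*a1/a2) * q^(n+j-1)) / q^n"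
    using H hq0 by (simp add: field_simps)
  have "gg q a1 a2 b0 b1 b2 s1 s2 (j+1) / (hh q a1 a2 n - hh q a1 a2 j)
     = b2 * (q^(m - Suc i) / (q^i * q^k)) * ((1-q^(j+1))*(1-q^j*y1)*(1-q^j*y2)*(1-q^j*y3))
      / ((1 - q^(n-j)) * (1 - (q*a1/a2) * q^(n+j-1)))"
    unfolding gq hq by (rule alg[OF AB ha2 _ _ _ P]) (use hq0 in simp_all)
  then show ?thesis unfolding A B N by (simp add: j_def n_def)
qed

theorem mainTheorem8:
  fixes q a1 a2 b0 b1 b2 s1 s2 y1 y2 y3 :: complex and n k :: nat
  assumes hq0: "q \<noteq> 0" and hq1: "cmod q \<noteq> 1"
    and ha2: "a2 \<noteq> 0" and hb2: "b2 \<noteq> 0"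
    and hdist: "\<And>i j. i \<noteq> j \<Longrightarrow> hh q a1 a2 i \<noteq> hh q a1 a2 j"
    and e1: "y1 + y2 + y3 = q * a1 / a2 - (b0 + s2 / a2) / b2"
    and e2: "y1 * y2 + y1 * y3 + y2 * y3
             = (q * b1 / b2) / q - (q * s1 / a2 + b0 * (q * a1 / a2)) / b2"
    and e3: "y1 * y2 * y3 = (q * a1 / a2) * (q * b1 / b2) / q"
    and hkn: "k \<le> n"
  shows "cc q a1 a2 b0 b1 b2 s1 s2 n k =
           b2 ^ (n - k) / q ^ ((n - k) * k) *
           (qpoch (q ^ (k + 1)) q (n - k) * qpoch (q ^ k * y1) q (n - k)
            * qpoch (q ^ k * y2) q (n - k) * qpoch (q ^ k * y3) q (n - k))
           / (qpoch q q (n - k) * qpoch ((q * a1 / a2) * q ^ (n + k - 1)) q (n - k))"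
proof -
  define m where "m = n - k"
  have n: "n = k + m" using hkn by (simp add: m_def)
  define z where "z = q * a1 / a2"
  define Pw where "Pw = (\<lambda>i. q^(m - Suc i) / (q^i * q^k))"
  define Nm where "Nm = (\<lambda>i::nat. (1 - q^i*q^(k+1)) * (1 - q^i*(q^k*y1)) * (1 - q^i*(q^k*y2)) * (1 - q^i*(q^k*y3)))"
  define Dn where "Dn = (\<lambda>i::nat. (1 - q^(m - Suc i)*q) * (1 - q^i*(z*q^(k+m+k-1))))"
  have "cc q a1 a2 b0 b1 b2 s1 s2 n k = (\<Prod>i<m. gg q a1 a2 b0 b1 b2 s1 s2 (k + i + 1) / (hh q a1 a2 (k+m) - hh q a1 a2 (k+i)))"
    unfolding cc_def n using prod.shift_bounds_nat_ivl[of "\<lambda>j. gg q a1 a2 b0 b1 b2 s1 s2 (j + 1) / (hh q a1 a2 (k+m) - hh q a1 a2 j)" 0 k m]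
    by (simp add: atLeast0LessThan add.commute)
  also have "\<dots> = (\<Prod>i<m. b2 * Pw i * Nm i / Dn i)"
    by (rule prod.cong[OF refl], unfold Pw_def Nm_def Dn_def z_def,
        rule factor_formula[OF hq0 ha2 hb2 hdist e1 e2 e3]) auto
  also have "\<dots> = b2^m * prod Pw {..<m} * prod Nm {..<m} / prod Dn {..<m}"
    by (simp add: prod_dividef prod.distrib)
  also have "prod Pw {..<m} = 1 / q^(m*k)"
  proof -
    have "prod Pw {..<m} = (\<Prod>i<m. q^(m - Suc i)) / ((\<Prod>i<m. q^i) * (\<Prod>i<m. q^k))"
      by (simp add: Pw_def prod_dividef prod.distrib)
    also have "(\<Prod>i<m. q^(m - Suc i)) = (\<Prod>i<m. q^i)"
      by (rule prod.nat_diff_reindex)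
    also have "(\<Prod>i<m. q^k) = q^(m*k)" by (simp add: power_mult mult.commute)
    finally show ?thesis using hq0 by (simp add: prod_zero_iff)
  qed
  also have "prod Nm {..<m} = qpoch (q ^ (k + 1)) q m * qpoch (q ^ k * y1) q m
            * qpoch (q ^ k * y2) q m * qpoch (q ^ k * y3) q m"
    by (simp add: Nm_def qpoch_def prod.distrib)
  also have "prod Dn {..<m} = qpoch q q m * qpoch (z * q ^ (n + k - 1)) q m"
  proof -
    have "prod Dn {..<m} = (\<Prod>i<m. 1 - q^(m - Suc i)*q) * (\<Prod>i<m. 1 - q^i*(z*q^(k+m+k-1)))"
      by (simp add: Dn_def prod.distrib)
    also have "(\<Prod>i<m. 1 - q^(m - Suc i)*q) = (\<Prod>i<m. 1 - q^i*q)"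
      by (rule prod.nat_diff_reindex[where g="\<lambda>i. 1 - q^i*q"])
    finally show ?thesis by (simp add: qpoch_def n add.commute add.left_commute)
  qed
  finally show ?thesis by (simp add: m_def[symmetric] z_def)
qed
end
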